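(* For every integer $n\ge 2$, \[ \sum_{k=2}^{n}(-1)^{k}\genfrac{\{}{\}}{0pt}{}{n}{k}(k-1)!\,H_{k-1}H_{k}=\frac{n+1}{2}B_{n-2}. \]
   Context: $\genfrac{\{}{\}}{0pt}{}{n}{k}$ denotes the Stirling numbers of the second kind, $H_k=\sum_{i=1}^k 1/i$ the harmonic numbers, and $B_n$ the Bernoulli numbers, $\sum_{n\ge0}B_n t^n/n!=t/(e^t-1)$ (so $B_1=-1/2$). *)

theory Defs
  imports "HOL-Analysis.Analysis" "HOL-Combinatorics.Stirling"
    "HOL-Computational_Algebra.Formal_Power_Series"
begin

text \<open>Bernoulli numbers via the exponential generating function
  sum B_n t^n/n! = t/(e^t - 1), so that B_1 = -1/2.  Division of formal
  power series over a field cancels the common factor X.\<close>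
definition bernoulli :: "nat \<Rightarrow> real" where
  "bernoulli n = fact n * fps_nth (fps_X / (fps_exp 1 - 1)) n"

end

theory Submission
  imports Defs
begin

lemma stirling_binom_sum:
  "Stirling (Suc n) (Suc k) = (\<Sum>i\<le>n. (n choose i) * Stirling i k)"
proof (induction n arbitrary: k)
  case 0
  then show ?case by (cases k) auto
next
  case (Suc n)
  have split: "(\<Sum>i\<le>Suc n. (Suc n choose i) * Stirling i k)
      = (\<Sum>i\<le>n. (n choose i) * Stirling i k) + (\<Sum>i\<le>n. (n choose i) * Stirling (Suc i) k)"
  proof -
    have "(\<Sum>i\<le>Suc n. (Suc n choose i) * Stirling i k)
        = (Suc n choose 0) * Stirling 0 k + (\<Sum>i\<le>n. (Suc n choose Suc i) * Stirling (Suc i) k)"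
      by (rule sum.atMost_Suc_shift)
    also have "\<dots> = Stirling 0 k + (\<Sum>i\<le>n. (n choose i) * Stirling (Suc i) k)
        + (\<Sum>i\<le>n. (n choose Suc i) * Stirling (Suc i) k)"
      by (simp add: sum.distrib algebra_simps)
    finally have A: "(\<Sum>i\<le>Suc n. (Suc n choose i) * Stirling i k) = Stirling 0 k + (\<Sum>i\<le>n. (n choose i) * Stirling (Suc i) k)
        + (\<Sum>i\<le>n. (n choose Suc i) * Stirling (Suc i) k)" .
    have B: "(\<Sum>i\<le>Suc n. (n choose i) * Stirling i k) = (n choose 0) * Stirling 0 k + (\<Sum>i\<le>n. (n choose Suc i) * Stirling (Suc i) k)"
      by (rule sum.atMost_Suc_shift)
    have C: "(\<Sum>i\<le>Suc n. (n choose i) * Stirling i k) = (\<Sum>i\<le>n. (n choose i) * Stirling i k)"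
      by simp
    show ?thesis using A B C by simp
  qed
  show ?case
  proof (cases k)
    case 0
    have "(\<Sum>i\<le>n. (n choose i) * Stirling (Suc i) 0) = 0" by simp
    then show ?thesis using split Suc.IH[of 0] 0 by simp
  next
    case (Suc k')
    have "(\<Sum>i\<le>n. (n choose i) * Stirling (Suc i) (Suc k'))
        = Suc k' * (\<Sum>i\<le>n. (n choose i) * Stirling i (Suc k')) + (\<Sum>i\<le>n. (n choose i) * Stirling i k')"
      by (simp add: sum.distrib sum_distrib_left algebra_simps)
    then show ?thesis using split Suc.IH[of "Suc k'"] Suc.IH[of k'] Suc by simp
  qed
qed

lemma stirling_binom_sum':
  "Suc k * Stirling n (Suc k) = (\<Sum>i<n. (n choose i) * Stirling i k)"
proof -
  have "Stirling (Suc n) (Suc k) = Suc k * Stirling n (Suc k) + Stirling n k" by simp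
  moreover have "(\<Sum>i\<le>n. (n choose i) * Stirling i k) = (\<Sum>i<n. (n choose i) * Stirling i k) + Stirling n k"
    by (simp add: lessThan_Suc_atMost[symmetric])
  ultimately show ?thesis using stirling_binom_sum[of n k] by simp
qed

definition Phi :: "(nat \<Rightarrow> real) \<Rightarrow> nat \<Rightarrow> real" where
  "Phi a n = (\<Sum>k\<le>n. (-1) ^ k * fact k * real (Stirling n k) * a k)"

definition Dl :: "(nat \<Rightarrow> real) \<Rightarrow> nat \<Rightarrow> real" where
  "Dl a j = real (Suc j) * a (Suc j) - real j * a j"

definition Sh :: "(nat \<Rightarrow> real) \<Rightarrow> nat \<Rightarrow> real" where
  "Sh a k = (if k = 0 then 0 else a (k - 1))"

lemma Phi_ext:
  assumes "n < N"
  shows "Phi a n = (\<Sum>k<N. (-1) ^ k * fact k * real (Stirling n k) * a k)"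
  unfolding Phi_def
proof (rule sum.mono_neutral_left)
  show "finite {..<N}" by simp
  show "{..n} \<subseteq> {..<N}" using assms by auto
  show "\<forall>i\<in>{..<N} - {..n}. (-1) ^ i * fact i * real (Stirling n i) * a i = 0" by auto
qed

lemma Phi_0: "Phi a 0 = a 0"
  by (simp add: Phi_def)

lemma Phi_add: "Phi (\<lambda>k. a k + b k) n = Phi a n + Phi b n"
  by (simp add: Phi_def sum.distrib algebra_simps)

lemma Phi_cong: "(\<And>k. a k = b k) \<Longrightarrow> Phi a n = Phi b n"
  by (simp add: Phi_def)

lemma Phi_D: "Phi a (Suc n) = - Phi (Dl a) n"
proof -
  define g where "g j = (-1) ^ j * fact j * real j * real (Stirling n j) * a j" for j
  define Y where "Y k = (-1) ^ Suc k * fact (Suc k) * real (Stirling n k) * a (Suc k)" for k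
  have "Phi a (Suc n) = (\<Sum>k\<le>n. (-1) ^ Suc k * fact (Suc k) * real (Stirling (Suc n) (Suc k)) * a (Suc k))"
    unfolding Phi_def by (subst sum.atMost_Suc_shift) simp
  also have "\<dots> = (\<Sum>k\<le>n. g (Suc k)) + (\<Sum>k\<le>n. Y k)"
    unfolding g_def Y_def by (simp add: sum.distrib[symmetric] algebra_simps)
  also have "(\<Sum>k\<le>n. g (Suc k)) = (\<Sum>k\<le>n. g k)"
  proof -
    have "(\<Sum>k\<le>Suc n. g k) = g 0 + (\<Sum>k\<le>n. g (Suc k))" by (rule sum.atMost_Suc_shift)
    moreover have "(\<Sum>k\<le>Suc n. g k) = (\<Sum>k\<le>n. g k)" by (simp add: g_def)
    moreover have "g 0 = 0" by (simp add: g_def)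
    ultimately show ?thesis by simp
  qed
  also have "(\<Sum>k\<le>n. g k) + (\<Sum>k\<le>n. Y k) = - Phi (Dl a) n"
    unfolding Phi_def Dl_def g_def Y_def
    by (simp add: sum.distrib[symmetric] sum_negf[symmetric] algebra_simps)
  finally show ?thesis .
qed

lemma Phi_Sh: "Phi (Sh a) n = - (\<Sum>i<n. real (n choose i) * Phi a i)"
proof -
  have "Phi (Sh a) n = (\<Sum>k<Suc n. (-1) ^ k * fact k * real (Stirling n k) * Sh a k)"
    by (rule Phi_ext) simp
  also have "\<dots> = (\<Sum>k<n. (-1) ^ Suc k * fact (Suc k) * real (Stirling n (Suc k)) * a k)"
    by (subst sum.lessThan_Suc_shift) (simp add: Sh_def)
  also have "\<dots> = (\<Sum>k<n. - ((-1) ^ k * fact k * a k * real (Suc k * Stirling n (Suc k))))"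
    by (rule sum.cong) (simp_all add: algebra_simps)
  also have "\<dots> = (\<Sum>k<n. - ((-1) ^ k * fact k * a k * (\<Sum>i<n. real (n choose i) * real (Stirling i k))))"
    by (subst stirling_binom_sum') simp
  also have "\<dots> = - (\<Sum>i<n. \<Sum>k<n. real (n choose i) * ((-1) ^ k * fact k * real (Stirling i k) * a k))"
    apply (simp add: sum_distrib_left sum_distrib_right sum_negf)
    apply (subst sum.swap)
    apply (simp add: algebra_simps)
    done
  also have "\<dots> = - (\<Sum>i<n. real (n choose i) * Phi a i)"
    by (intro arg_cong[where f=uminus] sum.cong refl)
       (simp add: Phi_ext[of _ n] sum_distrib_left)
  finally show ?thesis .
qed


definition egf :: "(nat \<Rightarrow> real) \<Rightarrow> real fps" where
  "egf a = Abs_fps (\<lambda>n. Phi a n / fact n)"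

definition EE :: "real fps" where
  "EE = fps_exp 1 - 1"

lemma EE_nth: "fps_nth EE n = (if n = 0 then 0 else 1 / fact n)"
  by (simp add: EE_def)

lemma EE_nz: "EE \<noteq> 0"
proof
  assume "EE = 0"
  then have "fps_nth EE 1 = 0" by simp
  then show False by (simp add: EE_nth)
qed

lemma egf_Sh: "egf (Sh a) = - (EE * egf a)"
proof (rule fps_ext)
  fix n
  have "fps_nth (EE * egf a) n = fps_nth (egf a * EE) n" by (simp add: mult.commute)
  also have "\<dots> = (\<Sum>i=0..n. Phi a i / fact i * (if n - i = 0 then 0 else 1 / fact (n - i)))"
    by (simp add: fps_mult_nth egf_def EE_nth)
  also have "\<dots> = (\<Sum>i<n. Phi a i / fact i * (1 / fact (n - i)))"
  proof -
    have "(\<Sum>i=0..n. Phi a i / fact i * (if n - i = 0 then 0 else 1 / fact (n - i)))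
        = (\<Sum>i<Suc n. Phi a i / fact i * (if n - i = 0 then 0 else 1 / fact (n - i)))"
      by (simp add: atLeast0AtMost lessThan_Suc_atMost)
    also have "\<dots> = (\<Sum>i<n. Phi a i / fact i * (if n - i = 0 then 0 else 1 / fact (n - i)))"
      by (subst sum.lessThan_Suc) (simp only: diff_self_eq_0 simp_thms if_True mult_zero_right add_0_right)
    also have "\<dots> = (\<Sum>i<n. Phi a i / fact i * (1 / fact (n - i)))"
      by (rule sum.cong) auto
    finally show ?thesis .
  qed
  also have "\<dots> = (\<Sum>i<n. real (n choose i) * Phi a i) / fact n"
    unfolding sum_divide_distrib
  proof (rule sum.cong)
    fix i assume "i \<in> {..<n}"
    then have "i \<le> n" by simp
    then show "Phi a i / fact i * (1 / fact (n - i)) = real (n choose i) * Phi a i / fact n"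
      by (simp add: binomial_fact field_simps mult.commute)
  qed simp
  finally show "fps_nth (egf (Sh a)) n = fps_nth (- (EE * egf a)) n"
    by (simp add: egf_def Phi_Sh)
qed

lemma egf_D: "fps_deriv (egf a) = - egf (Dl a)"
proof (rule fps_ext)
  fix n
  show "fps_nth (fps_deriv (egf a)) n = fps_nth (- egf (Dl a)) n"
    by (simp add: egf_def Phi_D field_simps del: of_nat_Suc)
qed

lemma Phi_delta: "Phi (\<lambda>j. if j = 0 then 1 else 0) m = real (Stirling m 0)"
proof -
  have "Phi (\<lambda>j. if j = 0 then 1 else 0) m = (\<Sum>k\<le>m. if k = 0 then real (Stirling m 0) else 0)"
    unfolding Phi_def by (rule sum.cong) auto
  also have "\<dots> = real (Stirling m 0)" by (simp add: sum.delta)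
  finally show ?thesis .
qed

lemma F1: "Phi (\<lambda>k. 1 / real k) n = (if n = 1 then -1 else 0)"
proof (cases n)
  case 0
  then show ?thesis by (simp add: Phi_0)
next
  case (Suc m)
  have "Dl (\<lambda>k. 1 / real k) = (\<lambda>j. if j = 0 then 1 else 0)"
    by (auto simp: Dl_def fun_eq_iff)
  then show ?thesis using Suc by (simp add: Phi_D Phi_delta) (cases m; simp)
qed

lemma F2: "Phi (\<lambda>k. harm (k - 1) / real k) n = (if n = 2 then 1 else 0)"
proof (cases n)
  case 0
  then show ?thesis by (simp add: Phi_0)
next
  case (Suc m)
  have "Dl (\<lambda>k. harm (k - 1) / real k) = (\<lambda>k. 1 / real k)"
  proof
    fix j show "Dl (\<lambda>k. harm (k - 1) / real k) j = 1 / real j"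
      by (cases j) (simp_all add: Dl_def harm_Suc harm_expand field_simps del: of_nat_Suc)
  qed
  then show ?thesis using Suc by (simp add: Phi_D F1)
qed

lemma egf_w: "egf (\<lambda>k. 1 / real k) = - fps_X"
  by (rule fps_ext) (simp add: egf_def F1)

lemma Sh_u: "Sh (\<lambda>j. 1 / real (Suc j)) = (\<lambda>k. 1 / real k)"
  by (auto simp: Sh_def fun_eq_iff)

lemma EE_egf_u: "EE * egf (\<lambda>j. 1 / real (Suc j)) = fps_X"
  using egf_Sh[of "\<lambda>j. 1 / real (Suc j)"] unfolding Sh_u egf_w by simp

lemma F3: "Phi (\<lambda>j. 1 / real (Suc j)) n = bernoulli n"
proof -
  have "fps_X / (fps_exp 1 - 1) = egf (\<lambda>j. 1 / real (Suc j))"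
    using EE_egf_u EE_nz fps_divide_times_eq[of EE "egf (\<lambda>j. 1 / real (Suc j))"]
    by (simp add: EE_def mult.commute)
  then show ?thesis by (simp add: bernoulli_def egf_def)
qed

lemma F4: "Phi (\<lambda>j. harm j / real j) (Suc m) = - bernoulli m"
proof -
  have "Dl (\<lambda>j. harm j / real j) = (\<lambda>j. 1 / real (Suc j))"
  proof
    fix j show "Dl (\<lambda>j. harm j / real j) j = 1 / real (Suc j)"
      by (cases j) (simp_all add: Dl_def harm_Suc harm_expand field_simps del: of_nat_Suc)
  qed
  then show ?thesis unfolding Phi_D by (simp only: F3)
qed

lemma Sh_c1: "Sh (\<lambda>j. harm j / real (Suc j)) = (\<lambda>k. harm (k - 1) / real k)"
  by (auto simp: Sh_def fun_eq_iff)

lemma egf_v: "egf (\<lambda>k. harm (k - 1) / real k) = fps_const (1/2) * fps_X ^ 2"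
  by (rule fps_ext) (simp only: egf_def fps_nth_Abs_fps F2, simp add: fps_X_power_nth)

lemma F5: "Phi (\<lambda>j. harm j / real (Suc j)) (Suc m) = - (real (Suc m) / 2) * bernoulli m"
proof -
  define c where "c = egf (\<lambda>j. harm j / real (Suc j))"
  define u where "u = egf (\<lambda>j. 1 / real (Suc j))"
  have 1: "- (EE * c) = fps_const (1/2) * fps_X ^ 2"
    using egf_Sh[of "\<lambda>j. harm j / real (Suc j)"] unfolding Sh_c1 egf_v c_def by simp
  have 2: "EE * u = fps_X" using EE_egf_u by (simp add: u_def)
  have "EE * (c + fps_const (1/2) * fps_X * u) = 0"
  proof -
    have "EE * (c + fps_const (1/2) * fps_X * u) = EE * c + fps_const (1/2) * fps_X * (EE * u)"
      by (simp add: algebra_simps)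
    also have "\<dots> = 0"
    proof -
      have 3: "EE * c = - (fps_const (1/2) * fps_X ^ 2)" using 1 by (metis minus_minus)
      show ?thesis by (simp add: 3 2 power2_eq_square algebra_simps)
    qed
    finally show ?thesis .
  qed
  then have "c = - (fps_const (1/2) * fps_X * u)"
    using EE_nz by (simp add: eq_neg_iff_add_eq_0)
  then have "fps_nth c (Suc m) = - (1/2) * fps_nth u m"
    by (simp add: mult.assoc)
  then show ?thesis
    by (simp add: c_def u_def egf_def F3 field_simps del: of_nat_Suc)
qed

lemma Dl_a: "Dl (\<lambda>k. harm (k - 1) * harm k / real k) j
   = harm j / real (Suc j) + harm j / real j"
proof (cases j)
  case 0
  then show ?thesis by (simp add: Dl_def harm_expand)
next
  case (Suc i)
  have h2: "harm (Suc (Suc i)) = harm (Suc i) + 1 / real (Suc (Suc i))"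
    by (simp add: harm_Suc field_simps del: of_nat_Suc)
  have h1: "harm i = harm (Suc i) - 1 / real (Suc i)"
    by (simp add: harm_Suc field_simps del: of_nat_Suc)
  show ?thesis using Suc
    apply (simp add: Dl_def del: of_nat_Suc)
    apply (subst h2, subst h1)
    apply (simp add: field_simps del: of_nat_Suc)
    done
qed

lemma F6: "Phi (\<lambda>k. harm (k - 1) * harm k / real k) (Suc (Suc m))
   = (real (Suc (Suc m)) + 1) / 2 * bernoulli m"
proof -
  have "Phi (\<lambda>k. harm (k - 1) * harm k / real k) (Suc (Suc m))
      = - Phi (\<lambda>j. harm j / real (Suc j) + harm j / real j) (Suc m)"
  proof -
    have "Dl (\<lambda>k. harm (k - 1) * harm k / real k) = (\<lambda>j. harm j / real (Suc j) + harm j / real j)"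
      by (rule ext) (rule Dl_a)
    then show ?thesis by (subst Phi_D) (simp only:)
  qed
  also have "\<dots> = - (Phi (\<lambda>j. harm j / real (Suc j)) (Suc m) + Phi (\<lambda>j. harm j / real j) (Suc m))"
    by (simp add: Phi_add)
  also have "\<dots> = (real (Suc (Suc m)) + 1) / 2 * bernoulli m"
    by (simp only: F4 F5) (simp add: field_simps)
  finally show ?thesis .
qed


lemma LHS_Phi:
  assumes "n \<ge> 2"
  shows "(\<Sum>k=2..n. (-1) ^ k * real (Stirling n k) * fact (k - 1)
            * harm (k - 1) * harm k) = Phi (\<lambda>k. harm (k - 1) * harm k / real k) n"
proof -
  have "Phi (\<lambda>k. harm (k - 1) * harm k / real k) n
      = (\<Sum>k\<in>{2..n}. (-1) ^ k * fact k * real (Stirling n k) * (harm (k - 1) * harm k / real k))"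
    unfolding Phi_def
  proof (rule sum.mono_neutral_right)
    show "finite {..n}" by simp
    show "{2..n} \<subseteq> {..n}" by auto
    show "\<forall>i\<in>{..n} - {2..n}. (-1) ^ i * fact i * real (Stirling n i) * (harm (i - 1) * harm i / real i) = 0"
    proof
      fix i assume "i \<in> {..n} - {2..n}"
      then have "i = 0 \<or> i = 1" by auto
      then show "(-1) ^ i * fact i * real (Stirling n i) * (harm (i - 1) * harm i / real i) = 0"
        by (auto simp: harm_expand)
    qed
  qed
  also have "\<dots> = (\<Sum>k=2..n. (-1) ^ k * real (Stirling n k) * fact (k - 1) * harm (k - 1) * harm k)"
  proof (rule sum.cong)
    fix k assume "k \<in> {2..n}"
    then have "k > 0" by auto
    then have "fact k = real k * fact (k - 1)" by (simp add: fact_reduce)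
    with \<open>k > 0\<close> show "(-1) ^ k * fact k * real (Stirling n k) * (harm (k - 1) * harm k / real k)
        = (-1) ^ k * real (Stirling n k) * fact (k - 1) * harm (k - 1) * harm k"
      by simp
  qed simp
  finally show ?thesis by simp
qed

theorem theorem5:
  fixes n :: nat
  assumes "n \<ge> 2"
  shows "(\<Sum>k=2..n. (-1) ^ k * real (Stirling n k) * fact (k - 1)
            * harm (k - 1) * harm k) = (real n + 1) / 2 * bernoulli (n - 2)"
proof -
  obtain m where m: "n = Suc (Suc m)" using assms by (metis add_2_eq_Suc le_Suc_ex)
  have "Phi (\<lambda>k. harm (k - 1) * harm k / real k) n = (real n + 1) / 2 * bernoulli (n - 2)"
    using F6[of m] unfolding m by simp
  then show ?thesis using LHS_Phi[OF assms] by simp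
qed

end
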